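(* Let $L$ be a finite lattice. If $\mathsf{C}(L)=\mathsf{Pol}_{0,1}(L)$, then the only tolerances on $L$ are $\mathrm{id}_L=\{(x,x):x\in L\}$ and $L^2$.
   Context: $L$ has bounds $0,1$. An $n$-ary aggregation function on $L$ ($n\ge1$) is a nondecreasing map $A:L^n\to L$ with $A(0,\dots,0)=0$ and $A(1,\dots,1)=1$; $\mathsf{C}(L)$ is the set of all of them. Polynomials on $L$ are functions $L^n\to L$ built from projections and constants by finitely many pointwise joins and meets; $\mathsf{Pol}_{0,1}(L)$ is the set of polynomials preserving $0$ and $1$ (i.e. $p(0,\dots,0)=0$, $p(1,\dots,1)=1$). A tolerance on $L$ is a reflexive, symmetric binary relation $T$ such that $(a,b),(c,d)\in T$ imply $(a\vee c,b\vee d),(a\wedge c,b\wedge d)\in T$. *)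

theory Defs
  imports Main
begin

text \<open>n-ary operations on L are represented as functions on lists; only their
values on lists of length n matter.\<close>

definition aggregation :: "nat \<Rightarrow> ('a::bounded_lattice list \<Rightarrow> 'a) \<Rightarrow> bool" where
  "aggregation n A \<longleftrightarrow> n \<ge> 1 \<and>
     (\<forall>xs ys. length xs = n \<longrightarrow> length ys = n \<longrightarrow> list_all2 (\<le>) xs ys \<longrightarrow> A xs \<le> A ys) \<and>
     A (replicate n bot) = bot \<and> A (replicate n top) = top"

inductive polynomial :: "nat \<Rightarrow> ('a::lattice list \<Rightarrow> 'a) \<Rightarrow> bool" for n :: nat where
  proj: "i < n \<Longrightarrow> polynomial n (\<lambda>xs. xs ! i)"
| const: "polynomial n (\<lambda>_. c)"
| join: "polynomial n p \<Longrightarrow> polynomial n q \<Longrightarrow> polynomial n (\<lambda>xs. sup (p xs) (q xs))"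
| meet: "polynomial n p \<Longrightarrow> polynomial n q \<Longrightarrow> polynomial n (\<lambda>xs. inf (p xs) (q xs))"

definition pol01 :: "nat \<Rightarrow> ('a::bounded_lattice list \<Rightarrow> 'a) \<Rightarrow> bool" where
  "pol01 n f \<longleftrightarrow> n \<ge> 1 \<and>
     (\<exists>p. polynomial n p \<and> (\<forall>xs. length xs = n \<longrightarrow> f xs = p xs)) \<and>
     f (replicate n bot) = bot \<and> f (replicate n top) = top"

definition C_eq_Pol01 :: "'a::bounded_lattice itself \<Rightarrow> bool" where
  "C_eq_Pol01 _ \<longleftrightarrow> (\<forall>n (f :: 'a list \<Rightarrow> 'a). aggregation n f \<longleftrightarrow> pol01 n f)"

definition tolerance :: "('a::lattice \<times> 'a) set \<Rightarrow> bool" where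
  "tolerance T \<longleftrightarrow> (\<forall>x. (x, x) \<in> T) \<and> (\<forall>a b. (a, b) \<in> T \<longrightarrow> (b, a) \<in> T) \<and>
     (\<forall>a b c d. (a, b) \<in> T \<longrightarrow> (c, d) \<in> T \<longrightarrow>
        (sup a c, sup b d) \<in> T \<and> (inf a c, inf b d) \<in> T)"

end

theory Submission
  imports Defs
begin

lemma poly_pres:
  assumes tol: "tolerance T"
  shows "polynomial n p \<Longrightarrow> length xs = n \<Longrightarrow> list_all2 (\<lambda>x y. (x, y) \<in> T) xs ys
     \<Longrightarrow> (p xs, p ys) \<in> T"
proof (induction rule: polynomial.induct)
  case (proj i)
  then show ?case using list_all2_nthD[of _ xs ys i] by auto
next
  case (const c)
  then show ?case using tol unfolding tolerance_def by blast
next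
  case (join p q)
  then show ?case using tol unfolding tolerance_def by blast
next
  case (meet p q)
  then show ?case using tol unfolding tolerance_def by blast
qed

theorem mainTheorem3:
  fixes T :: "('a::{finite, bounded_lattice} \<times> 'a) set"
  assumes "C_eq_Pol01 TYPE('a)"
    and "tolerance T"
  shows "T = Id \<or> T = UNIV"
proof (cases "T = Id")
  case True then show ?thesis by simp
next
  case False
  have refl: "\<And>x. (x,x) \<in> T" and sym: "\<And>a b. (a,b) \<in> T \<Longrightarrow> (b,a) \<in> T"
    and sup: "\<And>a b c d. (a,b) \<in> T \<Longrightarrow> (c,d) \<in> T \<Longrightarrow> (sup a c, sup b d) \<in> T"
    and inf: "\<And>a b c d. (a,b) \<in> T \<Longrightarrow> (c,d) \<in> T \<Longrightarrow> (inf a c, inf b d) \<in> T"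
    using assms(2) unfolding tolerance_def by blast+
  obtain a b where ab: "(a,b) \<in> T" "a \<noteq> b" using False refl by auto
  obtain u v where uv: "(u,v) \<in> T" "\<not> v \<le> u"
  proof (cases "b \<le> a")
    case True
    then have "\<not> a \<le> b" using ab(2) by auto
    then show ?thesis using that[of b a] sym[OF ab(1)] by blast
  next
    case False then show ?thesis using that ab(1) by blast
  qed
  define f :: "'a list \<Rightarrow> 'a" where "f = (\<lambda>xs. if v \<le> hd xs then top else bot)"
  have vbot: "v \<noteq> bot" using uv(2) by auto
  have "aggregation 1 f"
    unfolding aggregation_def f_def
  proof (intro conjI allI impI)
    fix xs ys :: "'a list"
    assume "length xs = 1" "length ys = 1" "list_all2 (\<le>) xs ys"
    then obtain x y where "xs = [x]" "ys = [y]" "x \<le> y"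
      by (cases xs; cases ys; auto)
    then show "(if v \<le> hd xs then top else bot :: 'a) \<le> (if v \<le> hd ys then top else bot)"
      by (auto dest: order_trans)
  qed (use vbot in \<open>auto simp: bot_unique\<close>)
  then have "pol01 1 f" using assms(1) unfolding C_eq_Pol01_def by blast
  then obtain p where p: "polynomial 1 p" "\<And>xs. length xs = 1 \<Longrightarrow> f xs = p xs"
    unfolding pol01_def by blast
  have "(p [u], p [v]) \<in> T"
    using poly_pres[OF assms(2) p(1)] uv(1) by simp
  then have bt: "(bot, top) \<in> T" using p(2)[of "[u]"] p(2)[of "[v]"] uv(2)
    by (simp add: f_def)
  have le: "(c, d) \<in> T" if "c \<le> d" for c d
  proof -
    have "(sup bot c, sup top c) \<in> T" using sup[OF bt refl] .
    then have "(c, top) \<in> T" by simp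
    from inf[OF this refl[of d]] show ?thesis using that by (simp add: inf_absorb1)
  qed
  have "(c, d) \<in> T" for c d
  proof -
    let ?x = "inf c d" and ?y = "sup c d"
    have A: "(?x, ?y) \<in> T" using le[of ?x ?y] by (meson inf_le1 le_supI1)
    have B: "(?y, ?x) \<in> T" using sym[OF A] .
    have 1: "(?x, d) \<in> T" using inf[OF A refl[of d]]
      by (simp add: inf.absorb1 inf.absorb2 inf_commute)
    have 2: "(c, ?x) \<in> T" using inf[OF B refl[of c]]
      by (simp add: inf.absorb1 inf.absorb2 inf_commute)
    have "(sup c ?x, sup ?x d) \<in> T" using sup[OF 2 1] .
    then show ?thesis by (simp add: sup.absorb1 sup.absorb2 sup_commute)
  qed
  then show ?thesis by auto
qed

end
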